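(* Let $\vec d=(\vec a,\vec b)$ be a bidegree sequence of length $n$ with $\sum_i a_i=\sum_i b_i=n\bar c$ and $m:=\min\vec d\in[1..n]$. Define $k_*=m+\sqrt{m^2+n(\bar c-2m)}$, and let $k=\lceil k_*\rceil$ if $m^2+n(\bar c-2m)\ge0$ (i.e. $k_*$ is real) and $k=1$ otherwise. If $$\max\vec d\le\min\Big(\Big\lfloor n\frac{\bar c-m}{k}+m\Big\rfloor,\ n\Big),$$ then $\vec d$ is graphic with loops.
   Context: A bidegree sequence of length $n$ is a pair $\vec d=(\vec a,\vec b)$ with $\vec a=(a_1,\dots,a_n)\in\mathbb{N}_0^n$ and $\vec b=(b_1,\dots,b_n)\in\mathbb{N}_0^n$. It is graphic with loops if there is an $n\times n$ matrix with entries in $\{0,1\}$ whose $i$th row sum is $a_i$ and whose $i$th column sum is $b_i$ for every $i\in[1..n]$; it is graphic if such a matrix exists with all diagonal entries equal to $0$. $\max\vec d$ and $\min\vec d$ denote the maximum and minimum over all $2n$ entries $a_1,\dots,a_n,b_1,\dots,b_n$. The number $\bar c$ (the average degree) is defined by $\sum_i a_i=\sum_i b_i=n\bar c$. For integers $a\le b$, $[a..b]:=\{x\in\mathbb{Z}:a\le x\le b\}$. *)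

theory Defs
  imports Complex_Main
begin

text \<open>A bidegree sequence of length n is represented by two functions a b :: nat => nat,
  of which only the values on indices 0..<n matter (index i+1 of the paper is i here).\<close>

definition graphic_with_loops :: "nat \<Rightarrow> (nat \<Rightarrow> nat) \<Rightarrow> (nat \<Rightarrow> nat) \<Rightarrow> bool" where
  "graphic_with_loops n a b \<longleftrightarrow>
     (\<exists>M :: nat \<Rightarrow> nat \<Rightarrow> bool.
        (\<forall>i<n. card {j. j < n \<and> M i j} = a i) \<and>
        (\<forall>j<n. card {i. i < n \<and> M i j} = b j))"

definition max_bideg :: "nat \<Rightarrow> (nat \<Rightarrow> nat) \<Rightarrow> (nat \<Rightarrow> nat) \<Rightarrow> nat" where
  "max_bideg n a b = Max (a ` {..<n} \<union> b ` {..<n})"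

definition min_bideg :: "nat \<Rightarrow> (nat \<Rightarrow> nat) \<Rightarrow> (nat \<Rightarrow> nat) \<Rightarrow> nat" where
  "min_bideg n a b = Min (a ` {..<n} \<union> b ` {..<n})"

end

theory Submission
  imports Defs
begin


lemma top_set:
  fixes b :: "'a \<Rightarrow> nat"
  assumes "finite J" "k \<le> card J"
  shows "\<exists>S\<subseteq>J. card S = k \<and> (\<forall>j\<in>S. \<forall>j'\<in>J-S. b j' \<le> b j)"
  using assms(2)
proof (induction k)
  case 0 then show ?case by auto
next
  case (Suc k)
  then obtain S where S: "S\<subseteq>J" "card S = k" "\<forall>j\<in>S. \<forall>j'\<in>J-S. b j' \<le> b j" by auto
  have fin: "finite (J - S)" using assms(1) by auto
  have ne: "J - S \<noteq> {}"
  proof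
    assume "J - S = {}" then have "J \<subseteq> S" by auto
    then have "card J \<le> card S" using card_mono[OF finite_subset[OF S(1) assms(1)]] by auto
    with Suc.prems S(2) show False by simp
  qed
  have "Max (b ` (J-S)) \<in> b ` (J-S)" using Max_in[of "b ` (J-S)"] fin ne by auto
  then obtain j where j: "j \<in> J - S" "b j = Max (b ` (J-S))" by auto
  have "\<forall>j'\<in>J-S. b j' \<le> b j" using j fin by auto
  moreover have "card (insert j S) = Suc k" using j S finite_subset[OF S(1) assms(1)] by auto
  ultimately show ?case using S j by (intro exI[of _ "insert j S"]) auto
qed

lemma gale_ryser:
  fixes a b :: "'a \<Rightarrow> nat"
  assumes "finite I" "finite J" "sum a I = sum b J"
    "\<forall>R\<subseteq>I. sum a R \<le> (\<Sum>j\<in>J. min (b j) (card R))"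
  shows "\<exists>M. (\<forall>i\<in>I. card {j\<in>J. M i j} = a i) \<and> (\<forall>j\<in>J. card {i\<in>I. M i j} = b j)"
  using assms
proof (induction I arbitrary: b rule: finite_induct)
  case empty
  then have "\<forall>j\<in>J. b j = 0" by simp
  then show ?case by (intro exI[of _ "\<lambda>_ _. False"]) simp
next
  case (insert r I)
  have "a r \<le> (\<Sum>j\<in>J. min (b j) 1)"
    using insert.prems(3)[rule_format, of "{r}"] by simp
  also have "\<dots> \<le> (\<Sum>j\<in>J. 1)" by (intro sum_mono) auto
  finally have ar: "a r \<le> card J" by simp
  obtain S where S: "S\<subseteq>J" "card S = a r" "\<forall>j\<in>S. \<forall>j'\<in>J-S. b j' \<le> b j"
    using top_set[OF insert.prems(1) ar] by blast
  have finS: "finite S" using S(1) insert.prems(1) finite_subset by blast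
  have bpos: "\<forall>j\<in>S. 1 \<le> b j"
  proof (rule ccontr)
    assume "\<not> (\<forall>j\<in>S. 1 \<le> b j)"
    then obtain j0 where j0: "j0 \<in> S" "b j0 = 0" by force
    have z: "\<forall>j\<in>J-S. b j = 0" using S(3) j0 by force
    have "(\<Sum>j\<in>J. min (b j) 1) = (\<Sum>j\<in>S. min (b j) 1) + (\<Sum>j\<in>J-S. min (b j) 1)"
      using sum.subset_diff[OF S(1) insert.prems(1)] by (simp add: add.commute)
    also have "(\<Sum>j\<in>J-S. min (b j) 1) = 0" using z by simp
    also have "(\<Sum>j\<in>S. min (b j) 1) = (\<Sum>j\<in>S-{j0}. min (b j) 1)"
      using sum.remove[OF finS j0(1), of "\<lambda>j. min (b j) 1"] j0 by simp
    also have "\<dots> \<le> (\<Sum>j\<in>S-{j0}. 1)" by (intro sum_mono) auto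
    also have "\<dots> = card S - 1" using j0 finS by simp
    finally have "(\<Sum>j\<in>J. min (b j) 1) \<le> card S - 1" by simp
    moreover have "card S \<ge> 1" using j0 finS card_0_eq by fastforce
    ultimately show False using \<open>a r \<le> (\<Sum>j\<in>J. min (b j) 1)\<close> S(2) by simp
  qed
  define b' where "b' j = (if j\<in>S then b j - 1 else b j)" for j
  have bb': "b j = b' j + (if j \<in> S then 1 else 0)" if "j \<in> J" for j
    using bpos by (auto simp: b'_def)
  have "sum b J = sum b' J + (\<Sum>j\<in>J. if j \<in> S then 1 else 0)"
    using bb' by (simp add: sum.distrib)
  also have "(\<Sum>j\<in>J. if j \<in> S then (1::nat) else 0) = card S"
    using S(1) insert.prems(1) by (simp add: sum.If_cases Int_absorb1)
  finally have sumb: "sum b J = sum b' J + a r" using S(2) by simp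
  have IHc: "\<forall>R\<subseteq>I. sum a R \<le> (\<Sum>j\<in>J. min (b' j) (card R))"
  proof (intro allI impI)
    fix R assume R: "R \<subseteq> I"
    have finR: "finite R" using R insert.hyps(1) finite_subset by blast
    have rR: "r \<notin> R" using R insert.hyps(2) by blast
    show "sum a R \<le> (\<Sum>j\<in>J. min (b' j) (card R))"
    proof (cases "\<forall>j\<in>S. card R < b j")
      case True
      then have "\<forall>j\<in>J. min (b' j) (card R) = min (b j) (card R)"
        by (auto simp: b'_def)
      then show ?thesis using insert.prems(3) R by auto
    next
      case False
      then obtain j0 where j0: "j0 \<in> S" "b j0 \<le> card R" by force
      have eq: "min (b' j) (card R) + (if j\<in>S then 1 else 0) = min (b j) (Suc (card R))"
        if "j \<in> J" for j
      proof (cases "j \<in> S")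
        case True then show ?thesis using bpos by (auto simp: b'_def)
      next
        case False
        then have "b j \<le> card R" using S(3) j0 that by force
        then show ?thesis using False by (auto simp: b'_def)
      qed
      have "(\<Sum>j\<in>J. min (b' j) (card R)) + card S = (\<Sum>j\<in>J. min (b j) (Suc (card R)))"
      proof -
        have "(\<Sum>j\<in>J. min (b j) (Suc (card R))) = (\<Sum>j\<in>J. min (b' j) (card R) + (if j\<in>S then 1 else 0))"
          using eq by simp
        also have "\<dots> = (\<Sum>j\<in>J. min (b' j) (card R)) + (\<Sum>j\<in>J. if j \<in> S then 1 else 0)"
          by (simp add: sum.distrib)
        also have "(\<Sum>j\<in>J. if j \<in> S then (1::nat) else 0) = card S"
          using S(1) insert.prems(1) by (simp add: sum.If_cases Int_absorb1)
        finally show ?thesis by simp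
      qed
      moreover have "sum a (insert r R) \<le> (\<Sum>j\<in>J. min (b j) (card (insert r R)))"
        using insert.prems(3) R by (meson insert_mono)
      ultimately show ?thesis using finR rR S(2) by simp
    qed
  qed
  obtain M' where M': "\<forall>i\<in>I. card {j\<in>J. M' i j} = a i" "\<forall>j\<in>J. card {i\<in>I. M' i j} = b' j"
    using insert.IH[OF insert.prems(1) _ IHc] insert.prems(2) sumb insert.hyps by auto
  define M where "M i j = (if i = r then j \<in> S else M' i j)" for i j
  have rows: "\<forall>i\<in>insert r I. card {j\<in>J. M i j} = a i"
  proof
    fix i assume i: "i \<in> insert r I"
    show "card {j\<in>J. M i j} = a i"
    proof (cases "i = r")
      case True
      then have "{j\<in>J. M i j} = S" using S(1) by (auto simp: M_def)
      then show ?thesis using S(2) True by simp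
    next
      case False
      then have "{j\<in>J. M i j} = {j\<in>J. M' i j}" by (auto simp: M_def)
      then show ?thesis using M'(1) i False by simp
    qed
  qed
  have cols: "\<forall>j\<in>J. card {i\<in>insert r I. M i j} = b j"
  proof
    fix j assume j: "j \<in> J"
    have fin: "finite {i\<in>I. M' i j}" using insert.hyps(1) by simp
    show "card {i\<in>insert r I. M i j} = b j"
    proof (cases "j \<in> S")
      case True
      then have "{i\<in>insert r I. M i j} = insert r {i\<in>I. M' i j}"
        using insert.hyps(2) by (auto simp: M_def)
      moreover have "1 \<le> b j" using bpos True by blast
      ultimately show ?thesis using fin insert.hyps(2) M'(2) j True by (simp add: b'_def)
    next
      case False
      then have "{i\<in>insert r I. M i j} = {i\<in>I. M' i j}"
        using insert.hyps(2) by (auto simp: M_def)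
      then show ?thesis using M'(2) j False by (simp add: b'_def)
    qed
  qed
  show ?case using rows cols by blast
qed



lemma key_Q:
  fixes mr Mr tr u nr :: real
  assumes D: "Mr > mr" and m1: "mr \<ge> 1" and t: "mr \<le> tr" "tr \<le> Mr" and Mn: "Mr \<le> nr"
    and Q: "2*mr*u + u*(Mr-mr) - u^2 \<le> mr*nr"
  shows "min (tr*Mr) (u*(Mr-mr) + tr*mr) * (Mr - mr) \<le> nr*mr*(Mr-mr) + u*(Mr-mr)*(tr - mr)"
proof -
  have "min (tr*Mr) (u*(Mr-mr) + tr*mr) \<le> nr*mr + u*(tr - mr)"
  proof (cases "tr \<le> u")
    case True
    have "tr*(Mr-u) \<le> mr*(nr-u)"
    proof (cases "Mr \<le> u")
      case True
      have "tr*(Mr-u) \<le> mr*(Mr-u)" using True t by (intro mult_right_mono_neg) auto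
      also have "\<dots> \<le> mr*(nr-u)" using Mn m1 by (intro mult_left_mono) auto
      finally show ?thesis .
    next
      case False
      have "tr*(Mr-u) \<le> u*(Mr-u)" using False \<open>tr \<le> u\<close> by (intro mult_right_mono) auto
      also have "\<dots> \<le> mr*(nr-u)" using Q by (simp add: algebra_simps power2_eq_square)
      finally show ?thesis .
    qed
    then have "tr*Mr \<le> nr*mr + u*(tr - mr)" by (simp add: algebra_simps)
    then show ?thesis by simp
  next
    case False
    have "u*(Mr-mr) + tr*mr \<le> nr*mr + u*(tr - mr)"
    proof (cases "u \<ge> mr")
      case True
      have "u*(u-mr) \<le> tr*(u-mr)" using True False by (intro mult_right_mono) auto
      then show ?thesis using Q by (simp add: algebra_simps power2_eq_square)
    next
      case nu: False
      have "tr*(mr-u) \<le> Mr*(mr-u)" using nu t by (intro mult_right_mono) auto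
      moreover have "mr*Mr \<le> mr*nr" using Mn m1 by simp
      ultimately show ?thesis by (simp add: algebra_simps)
    qed
    then show ?thesis by simp
  qed
  then have "min (tr*Mr) (u*(Mr-mr) + tr*mr) * (Mr - mr) \<le> (nr*mr + u*(tr - mr)) * (Mr-mr)"
    using D by (intro mult_right_mono) auto
  then show ?thesis by (simp add: algebra_simps)
qed

lemma chord:
  fixes mr Mr tr br :: real
  assumes "mr \<le> br" "br \<le> Mr" "mr \<le> tr" "tr \<le> Mr"
  shows "(Mr - mr) * min br tr \<ge> mr*(Mr-mr) + (br - mr)*(tr - mr)"
proof (cases "br \<le> tr")
  case True
  have "(br - mr)*(Mr - tr) \<ge> 0" using assms by simp
  then show ?thesis using True by (simp add: algebra_simps)
next
  case False
  have "(tr - mr)*(Mr - br) \<ge> 0" using assms by simp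
  then show ?thesis using False by (simp add: algebra_simps)
qed

theorem theorem5:
  fixes n :: nat and a b :: "nat \<Rightarrow> nat" and cbar :: real and m k :: int
  assumes sums: "real (\<Sum>i<n. a i) = real n * cbar" "real (\<Sum>i<n. b i) = real n * cbar"
    and m_def: "m = int (min_bideg n a b)"
    and m_range: "1 \<le> m" "m \<le> int n"
    and k_def: "k = (if real_of_int (m^2) + real n * (cbar - 2 * real_of_int m) \<ge> 0
                     then \<lceil>real_of_int m + sqrt (real_of_int (m^2) + real n * (cbar - 2 * real_of_int m))\<rceil>
                     else 1)"
    and max_bound: "int (max_bideg n a b) \<le>
         min \<lfloor>real n * (cbar - real_of_int m) / real_of_int k + real_of_int m\<rfloor> (int n)"
  shows "graphic_with_loops n a b"
proof -
  define N where "N = {..<n}"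
  define mn where "mn = min_bideg n a b"
  define Mx where "Mx = max_bideg n a b"
  have n1: "n \<ge> 1" using m_range by simp
  have finU: "finite (a ` N \<union> b ` N)" by (simp add: N_def)
  have bnds: "mn \<le> a i \<and> a i \<le> Mx \<and> mn \<le> b i \<and> b i \<le> Mx" if "i < n" for i
    using that finU unfolding mn_def Mx_def min_bideg_def max_bideg_def N_def
    by (auto intro: Min_le Max_ge)
  have Mxn: "Mx \<le> n" using max_bound unfolding Mx_def by simp
  have mr1: "mn \<ge> 1" using m_range m_def mn_def by simp
  have sumab: "sum a N = sum b N" using sums unfolding N_def by (metis of_nat_eq_iff)
  define mr where "mr = real mn"
  define Mr where "Mr = real Mx"
  define X where "X = real n * cbar - real n * mr"
  have mreal: "real_of_int m = mr" using m_def mn_def mr_def by simp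
  have sumbX: "(\<Sum>j\<in>N. (real (b j) - mr)) = X"
    using sums(2) by (simp add: sum_subtractf N_def X_def)
  have cond: "\<forall>R\<subseteq>N. sum a R \<le> (\<Sum>j\<in>N. min (b j) (card R))"
  proof (intro allI impI)
    fix R assume R: "R \<subseteq> N"
    define t where "t = card R"
    have finR: "finite R" using R finite_subset N_def by blast
    have tn: "t \<le> n" using card_mono[OF _ R] by (simp add: N_def t_def)
    have aR: "a i \<le> Mx" "mn \<le> a i" if "i \<in> N" for i using bnds that by (auto simp: N_def)
    have LM: "sum a R \<le> t * Mx"
      using sum_bounded_above[of R a Mx] aR R unfolding t_def by auto
    show "sum a R \<le> (\<Sum>j\<in>N. min (b j) (card R))"
    proof (cases "Mx \<le> t")
      case True
      have "(\<Sum>j\<in>N. min (b j) (card R)) = sum b N"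
        using True bnds by (intro sum.cong) (auto simp: N_def t_def, meson le_trans min_absorb1)
      moreover have "sum a R \<le> sum a N" using R by (intro sum_mono2) (auto simp: N_def)
      ultimately show ?thesis using sumab by simp
    next
      case notMt: False
      show ?thesis
      proof (cases "t \<le> mn")
        case True
        have "(\<Sum>j\<in>N. min (b j) (card R)) = (\<Sum>j\<in>N. t)"
          using True bnds by (intro sum.cong) (auto simp: N_def t_def, meson le_trans min_absorb2)
        also have "\<dots> = n * t" by (simp add: N_def)
        finally have e: "(\<Sum>j\<in>N. min (b j) (card R)) = n * t" .
        have h1: "t * Mx \<le> t * n" by (rule mult_le_mono2[OF Mxn])
        have "sum a R \<le> t * n" by (rule order_trans[OF LM h1])
        then show ?thesis using e by (simp add: mult.commute)
      next
        case False
        define tr where "tr = real t"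
        have D: "Mr > mr" using False notMt by (simp add: Mr_def mr_def)
        have trb: "mr \<le> tr" "tr \<le> Mr" using False notMt by (auto simp: mr_def Mr_def tr_def)
        define L where "L = real (sum a R)"
        have "real (sum a R) \<le> real (t*Mx)" using LM by (simp only: of_nat_le_iff)
        then have L1: "L \<le> tr * Mr" unfolding L_def tr_def Mr_def by simp
        have "sum a N = sum a R + sum a (N - R)" using R by (simp add: N_def sum.subset_diff)
        moreover have "(n - t) * mn \<le> sum a (N - R)"
        proof -
          have "card (N - R) = n - t" using R finR by (simp add: card_Diff_subset N_def t_def)
          then show ?thesis using sum_bounded_below[of "N-R" mn a] aR by (auto simp: mult.commute)
        qed
        ultimately have "sum a R + (n - t) * mn \<le> sum a N" by simp
        then have "real (sum a R + (n - t) * mn) \<le> real (sum a N)" by (simp only: of_nat_le_iff)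
        then have "real (sum a R) + real ((n - t) * mn) \<le> real n * cbar"
          using sums(1) by (simp only: of_nat_add N_def)
        moreover have "real ((n-t)*mn) = real n * mr - tr*mr"
          using tn by (simp add: of_nat_diff tr_def mr_def left_diff_distrib)
        ultimately have L2: "L \<le> X + tr * mr" unfolding L_def X_def by linarith
        define RH where "RH = (\<Sum>j\<in>N. real (min (b j) t))"
        have "(\<Sum>j\<in>N. mr*(Mr-mr) + (real (b j) - mr)*(tr - mr)) \<le> (\<Sum>j\<in>N. (Mr - mr) * real (min (b j) t))"
        proof (intro sum_mono)
          fix j assume "j \<in> N"
          then have "mr \<le> real (b j)" "real (b j) \<le> Mr" using bnds by (auto simp: N_def mr_def Mr_def)
          then show "mr*(Mr-mr) + (real (b j) - mr)*(tr - mr) \<le> (Mr - mr) * real (min (b j) t)"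
            using chord[of mr "real (b j)" Mr tr] trb by (simp add: tr_def)
        qed
        note sumineq = this
        have RH1: "real n * mr*(Mr-mr) + X*(tr-mr) \<le> (Mr - mr) * RH"
        proof -
          have e1: "(\<Sum>j\<in>N. (real (b j) - mr)*(tr - mr)) = X*(tr-mr)"
            unfolding sum_distrib_right[symmetric] sumbX ..
          have e2: "(\<Sum>j\<in>N. (Mr - mr) * real (min (b j) t)) = (Mr - mr) * RH"
            by (simp add: RH_def sum_distrib_left)
          show ?thesis using sumineq e1 e2 by (simp add: sum.distrib N_def)
        qed
        define kr where "kr = real_of_int k"
        define disc where "disc = mr^2 + real n * (cbar - 2*mr)"
        have kdef: "k = (if disc \<ge> 0 then \<lceil>mr + sqrt disc\<rceil> else 1)"
          using k_def mreal by (simp add: disc_def)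
        have kr1: "kr \<ge> 1"
        proof (cases "disc \<ge> 0")
          case True
          then have "kr \<ge> mr + sqrt disc" using kdef by (simp add: kr_def)
          moreover have "mr \<ge> 1" using mr1 by (simp add: mr_def)
          ultimately show ?thesis using real_sqrt_ge_zero[OF True] by linarith
        qed (simp add: kdef kr_def)
        have "int Mx \<le> \<lfloor>real n * (cbar - mr) / kr + mr\<rfloor>"
          using max_bound mreal by (simp add: Mx_def kr_def)
        then have "real_of_int (int Mx) \<le> real n * (cbar - mr) / kr + mr" by (simp only: le_floor_iff)
        then have "Mr \<le> real n * (cbar - mr) / kr + mr" by (simp add: Mr_def)
        then have "(Mr - mr) * kr \<le> X" using kr1
          by (simp add: X_def field_simps)
        define u where "u = X / (Mr - mr)"
        have Xu: "X = u * (Mr - mr)" using D by (simp add: u_def)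
        have ku: "kr \<le> u" using \<open>(Mr - mr) * kr \<le> X\<close> D
          by (simp add: u_def field_simps mult.commute)
        have discX: "disc = mr^2 + X - real n * mr" by (simp add: disc_def X_def algebra_simps)
        have sq: "(u - mr)^2 \<ge> disc"
        proof (cases "disc \<ge> 0")
          case True
          then have "kr \<ge> mr + sqrt disc" using kdef by (simp add: kr_def)
          then have "u - mr \<ge> sqrt disc" using ku by simp
          then have "(sqrt disc)^2 \<le> (u - mr)^2" using True by (intro power_mono) auto
          then show ?thesis using True by simp
        next
          case False
          then show ?thesis using zero_le_power2[of "u-mr"] by linarith
        qed
        have Q: "2*mr*u + u*(Mr-mr) - u^2 \<le> mr*real n"
        proof -
          have e: "(u-mr)^2 = u^2 - 2*mr*u + mr^2" by (simp add: power2_eq_square algebra_simps)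
          have c: "real n * mr = mr * real n" by simp
          show ?thesis using sq discX Xu e c by linarith
        qed
        have "min (tr*Mr) (u*(Mr-mr) + tr*mr) * (Mr - mr) \<le> real n*mr*(Mr-mr) + u*(Mr-mr)*(tr - mr)"
          using key_Q[OF D _ trb _ Q] mr1 Mxn by (simp add: mr_def Mr_def)
        moreover have "L * (Mr - mr) \<le> min (tr*Mr) (u*(Mr-mr) + tr*mr) * (Mr - mr)"
          using L1 L2 Xu D by (intro mult_right_mono) auto
        moreover have "u*(Mr-mr)*(tr - mr) = X*(tr-mr)" using Xu by simp
        moreover have "(Mr-mr)*RH = RH*(Mr-mr)" by simp
        ultimately have "L * (Mr - mr) \<le> RH * (Mr - mr)" using RH1 by linarith
        then have "L \<le> RH" using D by simp
        then have "real (sum a R) \<le> real (\<Sum>j\<in>N. min (b j) t)" by (simp add: L_def RH_def)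
        then have "sum a R \<le> (\<Sum>j\<in>N. min (b j) t)" by (simp only: of_nat_le_iff)
        then show ?thesis by (simp add: t_def)
      qed
    qed
  qed
  obtain M where M: "\<forall>i\<in>N. card {j\<in>N. M i j} = a i" "\<forall>j\<in>N. card {i\<in>N. M i j} = b j"
    using gale_ryser[of N N a b] cond sumab by (auto simp: N_def)
  show ?thesis unfolding graphic_with_loops_def
    using M by (intro exI[of _ M]) (simp add: N_def)
qed


end
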